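(* Let $T_{init}$ be the number of nodes of the initial tree. The expected optimization time of (1+1) GP-single on MO-WORDER is $O(T_{init}+n\log n)$.
   Context: Fix an integer $n\ge 1$ and real weights $w_1\ge w_2\ge\dots\ge w_n>0$. The terminal set is $T=\{x_1,\bar x_1,\dots,x_n,\bar x_n\}$ ($\bar x_i$ is the complement of $x_i$; $x_i$ is called positive). A syntax tree is either the empty tree or a rooted ordered binary tree whose inner nodes are all labelled by the binary function $J$ (join, exactly two ordered children) and whose leaves are labelled by elements of $T$. The complexity $C(X)$ is the number of nodes of $X$ (0 for the empty tree). The leaf list $l$ of $X$ is the sequence of leaf labels in an inorder traversal. WORDER: build a list $S$ by scanning $l$ from front to rear and appending a literal only if neither it nor its complement is already in $S$; WORDER$(X)=\sum_{i:\,x_i\in S} w_i$. MO-WORDER$(X)=(\mathrm{WORDER}(X),C(X))$, WORDER to be maximized and $C$ minimized. Mutation (HVL-Prime applied $k$ times): each application chooses uniformly at random one of three operations. Substitute: replace a uniformly random leaf by a uniformly random $u\in T$. Insert: choose a uniformly random node $v$ and uniformly random $u\in T$, replace $v$ by a $J$-node with children $u$ and $v$ in uniformly random order (inserting into the empty tree yields the single leaf $u$). Delete: choose a uniformly random leaf $v$ with parent $p$ and sibling $u$, replace $p$ by $u$ (deleting $p$ and $v$; deleting the only leaf of a one-leaf tree yields the empty tree). Single-operation mutation uses $k=1$. (1+1) GP-single on MO-$F$: start with an initial tree $X$; in each iteration let $Y$ be $X$ mutated with $k=1$, and set $X:=Y$ iff $F(Y)>F(X)$, or $F(Y)=F(X)$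 and $C(Y)\le C(X)$. Expected optimization time: expected number of iterations (fitness evaluations) until the current solution is for the first time optimal, i.e. has maximum possible $F$-value and, among such trees, minimum complexity. *)

theory Defs
  imports "HOL-Probability.Probability"
begin

text \<open>Literals: (i, True) is x_i, (i, False) is its complement.\<close>
type_synonym lit = "nat \<times> bool"

text \<open>Non-empty syntax trees; the empty tree is represented by None.\<close>
datatype stree = Leaf lit | Jn stree stree

type_synonym tree = "stree option"

definition Tn :: "nat \<Rightarrow> lit set" where
  "Tn n = {1..n} \<times> UNIV"

fun snodes :: "stree \<Rightarrow> nat" where
  "snodes (Leaf a) = 1"
| "snodes (Jn l r) = 1 + snodes l + snodes r"

definition cplx :: "tree \<Rightarrow> nat" where
  "cplx X = (case X of None \<Rightarrow> 0 | Some t \<Rightarrow> snodes t)"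

fun sleaves :: "stree \<Rightarrow> lit list" where
  "sleaves (Leaf a) = [a]"
| "sleaves (Jn l r) = sleaves l @ sleaves r"

definition leaves :: "tree \<Rightarrow> lit list" where
  "leaves X = (case X of None \<Rightarrow> [] | Some t \<Rightarrow> sleaves t)"

definition over_terms :: "nat \<Rightarrow> tree \<Rightarrow> bool" where
  "over_terms n X \<longleftrightarrow> set (leaves X) \<subseteq> Tn n"

fun scanS :: "nat set \<Rightarrow> lit list \<Rightarrow> lit list" where
  "scanS seen [] = []"
| "scanS seen ((i, b) # xs) =
     (if i \<in> seen then scanS seen xs else (i, b) # scanS (insert i seen) xs)"

definition worder :: "(nat \<Rightarrow> real) \<Rightarrow> tree \<Rightarrow> real" where
  "worder w X = sum_list (map (\<lambda>(i, b). if b then w i else 0) (scanS {} (leaves X)))"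

definition optimal :: "nat \<Rightarrow> (nat \<Rightarrow> real) \<Rightarrow> tree \<Rightarrow> bool" where
  "optimal n w X \<longleftrightarrow> over_terms n X \<and>
     (\<forall>Y. over_terms n Y \<longrightarrow> worder w Y \<le> worder w X \<and>
          (worder w Y = worder w X \<longrightarrow> cplx X \<le> cplx Y))"

text \<open>Node positions as paths (False = left child, True = right child).\<close>
fun paths :: "stree \<Rightarrow> bool list set" where
  "paths (Leaf a) = {[]}"
| "paths (Jn l r) = insert [] ((#) False ` paths l \<union> (#) True ` paths r)"

fun lpaths :: "stree \<Rightarrow> bool list set" where
  "lpaths (Leaf a) = {[]}"
| "lpaths (Jn l r) = (#) False ` lpaths l \<union> (#) True ` lpaths r"

fun modify_at :: "(stree \<Rightarrow> stree) \<Rightarrow> bool list \<Rightarrow> stree \<Rightarrow> stree" where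
  "modify_at f [] t = f t"
| "modify_at f (False # p) (Jn l r) = Jn (modify_at f p l) r"
| "modify_at f (True # p) (Jn l r) = Jn l (modify_at f p r)"
| "modify_at f (d # p) (Leaf a) = Leaf a"

text \<open>Delete the leaf at path p: its parent is replaced by its sibling.\<close>
definition del_leaf :: "stree \<Rightarrow> bool list \<Rightarrow> tree" where
  "del_leaf t p = (if p = [] then None else
     Some (modify_at (\<lambda>par. case par of Jn l r \<Rightarrow> (if last p then l else r) | x \<Rightarrow> x)
                     (butlast p) t))"

definition mut_sub :: "nat \<Rightarrow> stree \<Rightarrow> tree pmf" where
  "mut_sub n t = do {
     p \<leftarrow> pmf_of_set (lpaths t);
     u \<leftarrow> pmf_of_set (Tn n);
     return_pmf (Some (modify_at (\<lambda>_. Leaf u) p t)) }"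

definition mut_ins :: "nat \<Rightarrow> stree \<Rightarrow> tree pmf" where
  "mut_ins n t = do {
     p \<leftarrow> pmf_of_set (paths t);
     u \<leftarrow> pmf_of_set (Tn n);
     b \<leftarrow> bernoulli_pmf (1/2);
     return_pmf (Some (modify_at (\<lambda>v. if b then Jn (Leaf u) v else Jn v (Leaf u)) p t)) }"

definition mut_del :: "stree \<Rightarrow> tree pmf" where
  "mut_del t = do {
     p \<leftarrow> pmf_of_set (lpaths t);
     return_pmf (del_leaf t p) }"

text \<open>One application of HVL-Prime (k = 1). On the empty tree, substitution and
  deletion have no leaf to act on and leave the tree unchanged.\<close>
definition mutate :: "nat \<Rightarrow> tree \<Rightarrow> tree pmf" where
  "mutate n X = do {
     op \<leftarrow> pmf_of_set {0, 1, 2 :: nat};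
     (case X of
        None \<Rightarrow> (if op = 1 then map_pmf (\<lambda>u. Some (Leaf u)) (pmf_of_set (Tn n))
                 else return_pmf None)
      | Some t \<Rightarrow> (if op = 0 then mut_sub n t else if op = 1 then mut_ins n t
                   else mut_del t)) }"

definition gp_step :: "nat \<Rightarrow> (nat \<Rightarrow> real) \<Rightarrow> tree \<Rightarrow> tree pmf" where
  "gp_step n w X = do {
     Y \<leftarrow> mutate n X;
     return_pmf (if worder w Y > worder w X \<or>
                    (worder w Y = worder w X \<and> cplx Y \<le> cplx X) then Y else X) }"

definition gp_stopped_step :: "nat \<Rightarrow> (nat \<Rightarrow> real) \<Rightarrow> tree \<Rightarrow> tree pmf" where
  "gp_stopped_step n w X = (if optimal n w X then return_pmf X else gp_step n w X)"

fun state_dist :: "nat \<Rightarrow> (nat \<Rightarrow> real) \<Rightarrow> tree \<Rightarrow> nat \<Rightarrow> tree pmf" where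
  "state_dist n w X0 0 = return_pmf X0"
| "state_dist n w X0 (Suc t) = bind_pmf (state_dist n w X0 t) (gp_stopped_step n w)"

text \<open>Expected optimization time E[T] = sum over t of P(T > t), where T is the first
  iteration index at which the current solution is optimal.\<close>
definition exp_opt_time :: "nat \<Rightarrow> (nat \<Rightarrow> real) \<Rightarrow> tree \<Rightarrow> ennreal" where
  "exp_opt_time n w X0 =
     (\<Sum>t. ennreal (measure_pmf.prob (state_dist n w X0 t) {X. \<not> optimal n w X}))"

end

theory Submission
  imports Defs
begin


definition firstlit :: "lit list \<Rightarrow> nat \<Rightarrow> lit option" where
  "firstlit l i = find (\<lambda>x. fst x = i) l"

definition posl :: "lit list \<Rightarrow> nat set" where
  "posl l = {i. firstlit l i = Some (i, True)}"

lemma firstlit_skip: "fst a \<noteq> i \<Longrightarrow> firstlit (xs @ a # ys) i = firstlit (xs @ ys) i"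
  unfolding firstlit_def by (induction xs) simp_all

lemma firstlit_in: "firstlit l i = Some x \<Longrightarrow> x \<in> set l \<and> fst x = i"
  unfolding firstlit_def find_Some_iff by auto

lemma posl_sub: "posl l \<subseteq> fst ` set l"
  unfolding posl_def using firstlit_in by force

lemma finite_posl: "finite (posl l)"
  using posl_sub finite_subset by blast

lemma card_posl: "card (posl l) \<le> length l"
proof -
  have "card (posl l) \<le> card (fst ` set l)" by (rule card_mono[OF finite_imageI[OF finite_set] posl_sub])
  also have "\<dots> \<le> card (set l)" by (rule card_image_le) simp
  also have "\<dots> \<le> length l" by (rule card_length)
  finally show ?thesis .
qed

lemma sum_scanS: "sum_list (map (\<lambda>(i, b). if b then w i else 0) (scanS seen l)) =
   (\<Sum>i \<in> {i. i \<notin> seen \<and> firstlit l i = Some (i, True)}. w i)"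
proof (induction l arbitrary: seen)
  case Nil
  then show ?case by (simp add: firstlit_def)
next
  case (Cons a xs)
  obtain j b where a: "a = (j, b)" by force
  have fin: "finite {i. i \<notin> S \<and> firstlit xs i = Some (i, True)}" for S
    by (rule finite_subset[OF _ finite_posl[of xs]]) (auto simp: posl_def)
  show ?case
  proof (cases "j \<in> seen")
    case True
    have "{i. i \<notin> seen \<and> firstlit (a # xs) i = Some (i, True)} = {i. i \<notin> seen \<and> firstlit xs i = Some (i, True)}"
      using True a by (auto simp: firstlit_def)
    then show ?thesis using True a Cons by simp
  next
    case False
    show ?thesis
    proof (cases b)
      case True
      have "{i. i \<notin> seen \<and> firstlit (a # xs) i = Some (i, True)} = insert j {i. i \<notin> insert j seen \<and> firstlit xs i = Some (i, True)}"
        using True False a by (auto simp: firstlit_def)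
      then show ?thesis using True False a Cons fin by simp
    next
      case F: False
      have "{i. i \<notin> seen \<and> firstlit (a # xs) i = Some (i, True)} = {i. i \<notin> insert j seen \<and> firstlit xs i = Some (i, True)}"
        using F False a by (auto simp: firstlit_def)
      then show ?thesis using F False a Cons by simp
    qed
  qed
qed

lemma worder_posl: "worder w X = (\<Sum>i \<in> posl (leaves X). w i)"
  unfolding worder_def sum_scanS posl_def by simp



fun lp :: "stree \<Rightarrow> bool list list" where
  "lp (Leaf a) = [[]]"
| "lp (Jn l r) = map ((#) False) (lp l) @ map ((#) True) (lp r)"

lemma set_lp: "set (lp t) = lpaths t"
  by (induction t) auto

lemma distinct_lp: "distinct (lp t)"
  by (induction t) (auto simp: distinct_map)

lemma length_lp: "length (lp t) = length (sleaves t)"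
  by (induction t) auto

lemma sleaves_ne: "sleaves t \<noteq> []"
  by (induction t) auto

lemma snodes_eq: "snodes t + 1 = 2 * length (sleaves t)"
  by (induction t) auto

lemma nil_lpaths: "[] \<in> lpaths t \<Longrightarrow> \<exists>a. t = Leaf a"
  by (cases t) auto

lemma sub_leaves: "k < length (sleaves t) \<Longrightarrow>
  sleaves (modify_at (\<lambda>_. Leaf u) (lp t ! k) t) = take k (sleaves t) @ u # drop (Suc k) (sleaves t)"
proof (induction t arbitrary: k)
  case (Leaf a)
  then show ?case by simp
next
  case (Jn l r)
  show ?case
  proof (cases "k < length (sleaves l)")
    case True
    then have "lp (Jn l r) ! k = False # (lp l ! k)" by (simp add: nth_append length_lp)
    then show ?thesis using Jn.IH(1)[OF True] True by simp
  next
    case False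
    define k' where "k' = k - length (sleaves l)"
    have k': "k' < length (sleaves r)" using Jn.prems False by (simp add: k'_def)
    have "lp (Jn l r) ! k = True # (lp r ! k')" using False k' by (simp add: nth_append length_lp k'_def)
    then show ?thesis using Jn.IH(2)[OF k'] False by (simp add: k'_def Suc_diff_le)
  qed
qed

lemma del_leaves: "k < length (sleaves t) \<Longrightarrow>
  leaves (del_leaf t (lp t ! k)) = take k (sleaves t) @ drop (Suc k) (sleaves t)"
proof (induction t arbitrary: k)
  case (Leaf a)
  then show ?case by (simp add: del_leaf_def leaves_def)
next
  case (Jn l r)
  show ?case
  proof (cases "k < length (sleaves l)")
    case True
    define q where "q = lp l ! k"
    have p: "lp (Jn l r) ! k = False # q" using True by (simp add: nth_append length_lp q_def)
    have qin: "q \<in> lpaths l" using True by (simp add: q_def length_lp flip: set_lp)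
    show ?thesis
    proof (cases "q = []")
      case True
      then obtain a where "l = Leaf a" using nil_lpaths qin by blast
      then show ?thesis using p True \<open>k < length (sleaves l)\<close> by (simp add: del_leaf_def leaves_def)
    next
      case False
      have "leaves (del_leaf l q) = take k (sleaves l) @ drop (Suc k) (sleaves l)"
        using Jn.IH(1)[OF \<open>k < length (sleaves l)\<close>] q_def by simp
      then show ?thesis using p False \<open>k < length (sleaves l)\<close>
        by (simp add: del_leaf_def leaves_def butlast.simps(2) split: if_splits)
    qed
  next
    case False
    define k' where "k' = k - length (sleaves l)"
    have k': "k' < length (sleaves r)" using Jn.prems False by (simp add: k'_def)
    define q where "q = lp r ! k'"
    have p: "lp (Jn l r) ! k = True # q" using False k' by (simp add: nth_append length_lp k'_def q_def)
    have qin: "q \<in> lpaths r" using k' by (simp add: q_def length_lp flip: set_lp)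
    have kk: "k = length (sleaves l) + k'" using False by (simp add: k'_def)
    show ?thesis
    proof (cases "q = []")
      case True
      then obtain a where "r = Leaf a" using nil_lpaths qin by blast
      then show ?thesis using p True k' kk by (simp add: del_leaf_def leaves_def)
    next
      case F: False
      have "leaves (del_leaf r q) = take k' (sleaves r) @ drop (Suc k') (sleaves r)"
        using Jn.IH(2)[OF k'] q_def by simp
      then show ?thesis using p F kk
        by (simp add: del_leaf_def leaves_def butlast.simps(2) split: if_splits)
    qed
  qed
qed

lemma ins_leaves:
  assumes "p \<in> paths t"
    and f: "\<And>v. \<exists>k \<le> length (sleaves v). sleaves (f v) = take k (sleaves v) @ u # drop k (sleaves v)"
  shows "\<exists>k \<le> length (sleaves t). sleaves (modify_at f p t) = take k (sleaves t) @ u # drop k (sleaves t)"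
  using assms(1)
proof (induction t arbitrary: p)
  case (Leaf a)
  then show ?case using f[of "Leaf a"] by simp
next
  case (Jn l r)
  show ?case
  proof (cases p)
    case Nil
    then show ?thesis using f[of "Jn l r"] by simp
  next
    case (Cons d q)
    show ?thesis
    proof (cases d)
      case False
      then have "q \<in> paths l" using Jn.prems Cons by auto
      then obtain k where "k \<le> length (sleaves l)" "sleaves (modify_at f q l) = take k (sleaves l) @ u # drop k (sleaves l)"
        using Jn.IH(1) by blast
      then show ?thesis using Cons False by (intro exI[of _ k]) auto
    next
      case True
      then have "q \<in> paths r" using Jn.prems Cons by auto
      then obtain k where "k \<le> length (sleaves r)" "sleaves (modify_at f q r) = take k (sleaves r) @ u # drop k (sleaves r)"
        using Jn.IH(2) by blast
      then show ?thesis using Cons True by (intro exI[of _ "length (sleaves l) + k"]) auto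
    qed
  qed
qed

lemma finite_paths: "finite (paths t)"
  by (induction t) auto

lemma nil_paths: "[] \<in> paths t"
  by (cases t) auto

lemma ins_f: "\<exists>k \<le> length (sleaves v). sleaves (if b then Jn (Leaf u) v else Jn v (Leaf u)) = take k (sleaves v) @ u # drop k (sleaves v)"
  by (cases b) (auto intro: exI[of _ 0] exI[of _ "length (sleaves v)"])



lemma find_app: "find P (xs @ ys) = (case find P xs of None \<Rightarrow> find P ys | Some x \<Rightarrow> Some x)"
  by (induction xs) auto

lemma posl_skip: "fst u \<noteq> i \<Longrightarrow> (i \<in> posl (xs @ u # ys)) = (i \<in> posl (xs @ ys))"
  unfolding posl_def using firstlit_skip by simp

lemma GL:
  fixes w :: "nat \<Rightarrow> real"
  assumes "finite A" "finite B" "A - B \<subseteq> {a}" "B - A \<subseteq> {b}" "\<forall>i\<in>A. w i > 0"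
    "sum w A \<le> sum w B"
  shows "card A \<le> card B"
proof (rule ccontr)
  assume c: "\<not> card A \<le> card B"
  show False
  proof (cases "B - A = {}")
    case True
    then have BA: "B \<subseteq> A" by blast
    show False
    proof (cases "A - B = {}")
      case True
      then have "A = B" using BA by blast
      then show False using c by simp
    next
      case False
      then have "A - B = {a}" using assms(3) by blast
      then have Ai: "A = insert a B" "a \<notin> B" "a \<in> A" using BA by blast+
      then have "sum w A = w a + sum w B" using assms(2) by simp
      then show False using assms(5,6) Ai by auto
    qed
  next
    case False
    then have "B - A = {b}" using assms(4) by blast
    then have "card (B - A) = 1" by simp
    moreover have "card (A - B) \<le> card {a}" using assms(3) by (intro card_mono) auto
    then have "card (A - B) \<le> 1" by simp
    moreover have "card A = card (A \<inter> B) + card (A - B)" using card_Int_Diff[OF assms(1)] .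
    moreover have "card B = card (B \<inter> A) + card (B - A)" using card_Int_Diff[OF assms(2)] .
    ultimately show False using c by (simp add: Int_commute)
  qed
qed

lemma GL2:
  fixes w :: "nat \<Rightarrow> real"
  assumes "finite A" "finite B" "A - B \<subseteq> {b}" "B - A \<subseteq> {b}" "\<forall>i\<in>A. w i \<ge> 0"
    "sum w A < sum w B"
  shows "card A < card B"
proof -
  have bB: "b \<in> B"
  proof (rule ccontr)
    assume "b \<notin> B"
    then have "B \<subseteq> A" using assms(4) by blast
    then have "sum w B \<le> sum w A" using assms(1,5) by (intro sum_mono2) auto
    then show False using assms(6) by simp
  qed
  then have AB: "A \<subseteq> B" using assms(3) by blast
  have "A \<noteq> B" using assms(6) by auto
  then show ?thesis using AB assms(2) by (simp add: psubset_card_mono)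
qed


definition pfo :: "lit list \<Rightarrow> nat \<Rightarrow> bool" where
  "pfo l k \<longleftrightarrow> snd (l ! k) \<and> fst (l ! k) \<notin> fst ` set (take k l)"

lemma good_del:
  assumes "k < length l" "\<not> pfo l k"
  shows "posl l \<subseteq> posl (take k l @ drop (Suc k) l)"
proof
  fix i assume i: "i \<in> posl l"
  define xs where "xs = take k l"
  define ys where "ys = drop (Suc k) l"
  define x where "x = l ! k"
  have l: "l = xs @ x # ys" using assms(1) by (simp add: id_take_nth_drop xs_def ys_def x_def)
  have fl: "firstlit l i = firstlit (xs @ x # ys) i" by (simp only: l[symmetric])
  show "i \<in> posl (take k l @ drop (Suc k) l)"
  proof (cases "fst x = i")
    case False
    then show ?thesis using posl_skip[OF False, of xs ys] i fl by (simp add: posl_def xs_def ys_def)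
  next
    case True
    show ?thesis
    proof (cases "find (\<lambda>x. fst x = i) xs")
      case None
      have "firstlit l i = Some x"
        using None True fl unfolding firstlit_def by (simp add: find_app)
      moreover have "firstlit l i = Some (i, True)" using i by (simp add: posl_def)
      moreover have "fst x \<notin> fst ` set xs"
        using None True unfolding find_None_iff by fastforce
      ultimately have "x = (i, True)" "fst x \<notin> fst ` set xs" by simp_all
      then have "pfo l k" unfolding pfo_def x_def[symmetric] xs_def[symmetric] by simp
      then show ?thesis using assms(2) by simp
    next
      case (Some z)
      have "firstlit l i = Some z" using fl unfolding firstlit_def by (simp add: find_app Some)
      moreover have "firstlit (xs @ ys) i = Some z" unfolding firstlit_def
        by (simp add: find_app Some)
      ultimately show ?thesis using i by (simp add: posl_def xs_def ys_def)
    qed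
  qed
qed


lemma card_pfo: "card {k. k < length l \<and> pfo l k} \<le> card (posl l)"
proof (rule card_inj_on_le[where f = "\<lambda>k. fst (l ! k)"])
  show "inj_on (\<lambda>k. fst (l ! k)) {k. k < length l \<and> pfo l k}"
  proof (rule inj_onI)
    fix x y assume x: "x \<in> {k. k < length l \<and> pfo l k}" and y: "y \<in> {k. k < length l \<and> pfo l k}"
      and e: "fst (l ! x) = fst (l ! y)"
    show "x = y"
    proof (rule ccontr)
      assume "x \<noteq> y"
      then consider "x < y" | "y < x" by linarith
      then show False
      proof cases
        case 1
        then have "l ! x \<in> set (take y l)" using x y by (auto simp: in_set_conv_nth)
        then have "fst (l ! x) \<in> fst ` set (take y l)" by blast
        then show False using y e by (simp add: pfo_def)
      next
        case 2
        then have "l ! y \<in> set (take x l)" using x y by (auto simp: in_set_conv_nth)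
        then have "fst (l ! y) \<in> fst ` set (take x l)" by blast
        then show False using x e by (simp add: pfo_def)
      qed
    qed
  qed
  show "(\<lambda>k. fst (l ! k)) ` {k. k < length l \<and> pfo l k} \<subseteq> posl l"
  proof
    fix a assume "a \<in> (\<lambda>k. fst (l ! k)) ` {k. k < length l \<and> pfo l k}"
    then obtain k where k: "k < length l" "pfo l k" "a = fst (l ! k)" by auto
    have "\<forall>j<k. fst (l ! j) \<noteq> a"
    proof (intro allI impI)
      fix j assume j: "j < k"
      then have "take k l ! j \<in> set (take k l)" using k by (intro nth_mem) simp
      then have "fst (l ! j) \<in> fst ` set (take k l)" using j by simp
      moreover have "a \<notin> fst ` set (take k l)" using k(2,3) by (simp add: pfo_def)
      ultimately show "fst (l ! j) \<noteq> a" by auto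
    qed
    then have "firstlit l a = Some (l ! k)" unfolding firstlit_def find_Some_iff using k by auto
    moreover have "l ! k = (a, True)" using k by (cases "l ! k") (auto simp: pfo_def)
    ultimately show "a \<in> posl l" by (simp add: posl_def)
  qed
  show "finite (posl l)" by (rule finite_posl)
qed


lemma card_good_del: "card {k. k < length l \<and> \<not> pfo l k} \<ge> length l - card (posl l)"
proof -
  let ?A = "{k. k < length l \<and> \<not> pfo l k}" and ?B = "{k. k < length l \<and> pfo l k}"
  have fA: "finite ?A" by (rule finite_subset[of _ "{..<length l}"]) auto
  have fB: "finite ?B" by (rule finite_subset[of _ "{..<length l}"]) auto
  have u: "?A \<union> ?B = {..<length l}" by auto
  have "?A \<inter> ?B = {}" by auto
  then have "card (?A \<union> ?B) = card ?A + card ?B" using card_Un_disjoint[OF fA fB] by simp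
  then have "card ?A + card ?B = length l" unfolding u by simp
  then show ?thesis using card_pfo[of l] by linarith
qed


lemma good_ins:
  assumes "j \<notin> fst ` set l"
  shows "posl (take k l @ (j, True) # drop k l) = insert j (posl l)" "j \<notin> posl l"
proof -
  show "j \<notin> posl l" using assms posl_sub by blast
  show "posl (take k l @ (j, True) # drop k l) = insert j (posl l)"
  proof (rule set_eqI)
    fix i
    show "(i \<in> posl (take k l @ (j, True) # drop k l)) = (i \<in> insert j (posl l))"
    proof (cases "i = j")
      case True
      have "fst ` set (take k l) \<subseteq> fst ` set l" by (rule image_mono[OF set_take_subset])
      then have "find (\<lambda>x. fst x = j) (take k l) = None" unfolding find_None_iff using assms
        by fastforce
      then have "firstlit (take k l @ (j, True) # drop k l) j = Some (j, True)"
        unfolding firstlit_def by (simp add: find_app)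
      then show ?thesis using True by (simp add: posl_def)
    next
      case False
      then show ?thesis using posl_skip[of "(j, True)" i "take k l" "drop k l"] by simp
    qed
  qed
qed



lemma GLg:
  fixes w :: "nat \<Rightarrow> real"
  assumes fA: "finite A" and fB: "finite B" and d: "A - B \<subseteq> {a, b}" "B - A \<subseteq> {a, b}"
    and pos: "\<forall>i\<in>A. w i > 0" and s: "sum w A \<le> sum w B"
  shows "card A \<le> card B"
proof (rule ccontr)
  assume c: "\<not> card A \<le> card B"
  show False
  proof (cases "B - A = {}")
    case True
    then have BA: "B \<subseteq> A" by blast
    have ne: "A - B \<noteq> {}" using BA c by (metis Diff_eq_empty_iff card_mono fA subset_antisym order_refl)
    have "sum w A = sum w (A - B) + sum w B" using sum.subset_diff[OF BA fA] .
    moreover have "sum w (A - B) > 0" using ne fA pos by (intro sum_pos) auto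
    ultimately show False using s by simp
  next
    case False
    then obtain x where x: "x \<in> B" "x \<notin> A" by blast
    have "A - B \<subseteq> {a, b} - {x}" using d(1) x by blast
    then have "card (A - B) \<le> card ({a, b} - {x})" by (intro card_mono) auto
    also have "\<dots> \<le> 1" using x d(2) by (cases "a = b") (auto simp: card_insert_if)
    finally have c1: "card (A - B) \<le> 1" .
    have "card (B - A) \<ge> 1" using x fB by (metis Diff_iff card_0_eq finite_Diff less_one not_less empty_iff)
    moreover have "card A = card (A \<inter> B) + card (A - B)" using card_Int_Diff[OF fA] .
    moreover have "card B = card (B \<inter> A) + card (B - A)" using card_Int_Diff[OF fB] .
    ultimately show False using c c1 by (simp add: Int_commute)
  qed
qed

definition Lc :: "tree \<Rightarrow> nat" where "Lc X = length (leaves X)"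
definition Pc :: "tree \<Rightarrow> nat" where "Pc X = card (posl (leaves X))"

lemma cplx_eq: "cplx X = 2 * Lc X - 1"
proof (cases X)
  case None then show ?thesis by (simp add: cplx_def Lc_def leaves_def)
next
  case (Some t)
  then show ?thesis using snodes_eq[of t] by (simp add: cplx_def Lc_def leaves_def)
qed

lemma Lc_None: "Lc X = 0 \<longleftrightarrow> X = None"
  by (cases X) (auto simp: Lc_def leaves_def sleaves_ne)

lemma posl_Tn: "set l \<subseteq> Tn n \<Longrightarrow> posl l \<subseteq> {1..n}"
  using posl_sub[of l] by (force simp: Tn_def)

definition edit :: "lit list \<Rightarrow> lit list \<Rightarrow> bool" where
  "edit l l' \<longleftrightarrow> l' = l \<or> (\<exists>k<length l. \<exists>u. l' = take k l @ u # drop (Suc k) l)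
     \<or> (\<exists>k\<le>length l. \<exists>u. l' = take k l @ u # drop k l)
     \<or> (\<exists>k<length l. l' = take k l @ drop (Suc k) l)"

definition acc :: "(nat \<Rightarrow> real) \<Rightarrow> tree \<Rightarrow> tree \<Rightarrow> tree" where
  "acc w X Y = (if worder w Y > worder w X \<or> (worder w Y = worder w X \<and> cplx Y \<le> cplx X) then Y else X)"

lemma gp_step_map: "gp_step n w X = map_pmf (acc w X) (mutate n X)"
  by (simp add: gp_step_def map_pmf_def acc_def)

lemma mono_step:
  assumes wpos: "\<forall>i\<in>{1..n}. w i > 0" and oX: "over_terms n X" and oY: "over_terms n Y"
    and e: "edit (leaves X) (leaves Y)"
    and a: "worder w Y > worder w X \<or> (worder w Y = worder w X \<and> cplx Y \<le> cplx X)"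
  shows "Pc X \<le> Pc Y \<and> Lc Y - Pc Y \<le> Lc X - Pc X"
proof -
  define l where "l = leaves X"
  define l' where "l' = leaves Y"
  have sA: "posl l \<subseteq> {1..n}" using oX posl_Tn by (simp add: over_terms_def l_def)
  have pA: "\<forall>i\<in>posl l. w i > 0" using sA wpos by blast
  have nB: "\<forall>i\<in>posl l'. w i \<ge> 0" using oY posl_Tn wpos
    by (force simp: over_terms_def l'_def)
  have wX: "worder w X = sum w (posl l)" by (simp add: worder_posl l_def)
  have wY: "worder w Y = sum w (posl l')" by (simp add: worder_posl l'_def)
  have ge: "sum w (posl l) \<le> sum w (posl l')" using a wX wY by auto
  have PL: "card (posl l') \<le> length l'" by (rule card_posl)
  consider "l' = l" | (sub) k u where "k < length l" "l' = take k l @ u # drop (Suc k) l"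
    | (ins) k u where "k \<le> length l" "l' = take k l @ u # drop k l"
    | (del) k where "k < length l" "l' = take k l @ drop (Suc k) l"
    using e unfolding edit_def l_def[symmetric] l'_def[symmetric] by blast
  then have "card (posl l) \<le> card (posl l') \<and> length l' - card (posl l') \<le> length l - card (posl l)"
  proof cases
    case 1 then show ?thesis by simp
  next
    case (sub k u)
    have l: "l = take k l @ l ! k # drop (Suc k) l" using sub(1) by (simp add: id_take_nth_drop)
    have d: "i \<in> posl l \<longleftrightarrow> i \<in> posl l'" if "i \<noteq> fst (l ! k)" "i \<noteq> fst u" for i
    proof -
      have "i \<in> posl l \<longleftrightarrow> i \<in> posl (take k l @ l ! k # drop (Suc k) l)" using l by simp
      also have "\<dots> \<longleftrightarrow> i \<in> posl (take k l @ drop (Suc k) l)" using posl_skip that by metis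
      also have "\<dots> \<longleftrightarrow> i \<in> posl l'" using posl_skip that sub(2) by metis
      finally show ?thesis .
    qed
    have "card (posl l) \<le> card (posl l')"
      by (rule GLg[OF finite_posl finite_posl _ _ pA ge, of "fst (l ! k)" "fst u"]) (use d in blast)+
    moreover have "length l' = length l" using sub by simp
    ultimately show ?thesis by simp
  next
    case (ins k u)
    have d: "i \<in> posl l \<longleftrightarrow> i \<in> posl l'" if "i \<noteq> fst u" for i
      using posl_skip[of u i "take k l" "drop k l"] that ins(2) by simp
    have len: "length l' = Suc (length l)" using ins by simp
    have "cplx Y > cplx X" using len cplx_eq[of X] cplx_eq[of Y] by (simp add: Lc_def l_def l'_def)
    then have "sum w (posl l) < sum w (posl l')" using a wX wY by auto
    then have "card (posl l) < card (posl l')"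
      by (intro GL2[OF finite_posl finite_posl, where b = "fst u"]) (use d pA in auto)
    then show ?thesis using len PL by simp
  next
    case (del k)
    have l: "l = take k l @ l ! k # drop (Suc k) l" using del(1) by (simp add: id_take_nth_drop)
    have d: "i \<in> posl l \<longleftrightarrow> i \<in> posl l'" if "i \<noteq> fst (l ! k)" for i
    proof -
      have "i \<in> posl l \<longleftrightarrow> i \<in> posl (take k l @ l ! k # drop (Suc k) l)" using l by simp
      also have "\<dots> \<longleftrightarrow> i \<in> posl l'" using posl_skip that del(2) by metis
      finally show ?thesis .
    qed
    have "card (posl l) \<le> card (posl l')"
      by (rule GLg[OF finite_posl finite_posl _ _ pA ge, of "fst (l ! k)" "fst (l ! k)"]) (use d in blast)+
    moreover have "length l' = length l - 1" using del by simp
    ultimately show ?thesis by simp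
  qed
  then show ?thesis by (simp add: Pc_def Lc_def l_def l'_def)
qed



lemma finite_Tn: "finite (Tn n)"
  by (simp add: Tn_def)

lemma Tn_ne: "n \<ge> 1 \<Longrightarrow> Tn n \<noteq> {}"
  by (auto simp: Tn_def)

lemma card_Tn: "card (Tn n) = 2 * n"
  by (simp add: Tn_def card_cartesian_product)

lemma lpaths_fin: "finite (lpaths t)" and lpaths_ne: "lpaths t \<noteq> {}"
  using length_lp[of t] sleaves_ne[of t] by (auto simp flip: set_lp)

lemma paths_ne: "paths t \<noteq> {}" using nil_paths by blast

lemma set_edit1: "set (take k l @ u # drop j l) \<subseteq> insert u (set l)"
  by (auto dest: in_set_takeD in_set_dropD)

lemma set_edit2: "set (take k l @ drop j l) \<subseteq> set l"
  by (auto dest: in_set_takeD in_set_dropD)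

lemma lpaths_nth: "p \<in> lpaths t \<Longrightarrow> \<exists>k < length (sleaves t). p = lp t ! k"
  by (auto simp: in_set_conv_nth length_lp simp flip: set_lp)

lemma supp_mutate:
  assumes n: "n \<ge> 1" and oX: "over_terms n X" and Y: "Y \<in> set_pmf (mutate n X)"
  shows "over_terms n Y \<and> edit (leaves X) (leaves Y)"
proof -
  have fT: "finite (Tn n)" "Tn n \<noteq> {}" using finite_Tn Tn_ne n by auto
  have sX: "set (leaves X) \<subseteq> Tn n" using oX by (simp add: over_terms_def)
  have "\<exists>u \<in> Tn n. leaves Y = leaves X
     \<or> (\<exists>k<length (leaves X). leaves Y = take k (leaves X) @ u # drop (Suc k) (leaves X))
     \<or> (\<exists>k\<le>length (leaves X). leaves Y = take k (leaves X) @ u # drop k (leaves X))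
     \<or> (\<exists>k<length (leaves X). leaves Y = take k (leaves X) @ drop (Suc k) (leaves X))"
  proof (cases X)
    case None
    obtain u where u: "u \<in> Tn n" using fT by blast
    from Y None have "Y = None \<or> (\<exists>u\<in>Tn n. Y = Some (Leaf u))"
      by (auto simp: mutate_def fT split: if_splits)
    then show ?thesis using None u by (auto simp: leaves_def)
  next
    case (Some t)
    have fl: "finite (lpaths t)" "lpaths t \<noteq> {}" by (rule lpaths_fin, rule lpaths_ne)
    have fp: "finite (paths t)" "paths t \<noteq> {}" by (rule finite_paths, rule paths_ne)
    have ops: "Y \<in> set_pmf (mut_sub n t) \<or> Y \<in> set_pmf (mut_ins n t) \<or> Y \<in> set_pmf (mut_del t)"
      using Y Some unfolding mutate_def by (simp split: if_splits)
    have s1: "\<exists>p u. p \<in> lpaths t \<and> u \<in> Tn n \<and> Y = Some (modify_at (\<lambda>_. Leaf u) p t)"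
      if "Y \<in> set_pmf (mut_sub n t)" using that unfolding mut_sub_def by (simp add: fT fl) fastforce
    have s2: "\<exists>p u b. p \<in> paths t \<and> u \<in> Tn n \<and> Y = Some (modify_at (\<lambda>v. if b then Jn (Leaf u) v else Jn v (Leaf u)) p t)"
      if "Y \<in> set_pmf (mut_ins n t)" using that unfolding mut_ins_def by (simp add: fT fp) fastforce
    have s3: "\<exists>p. p \<in> lpaths t \<and> Y = del_leaf t p"
      if "Y \<in> set_pmf (mut_del t)" using that unfolding mut_del_def by (simp add: fl) blast
    consider
      (s) p u where "p \<in> lpaths t" "u \<in> Tn n" "Y = Some (modify_at (\<lambda>_. Leaf u) p t)"
    | (i) p u b where "p \<in> paths t" "u \<in> Tn n" "Y = Some (modify_at (\<lambda>v. if b then Jn (Leaf u) v else Jn v (Leaf u)) p t)"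
    | (d) p where "p \<in> lpaths t" "Y = del_leaf t p"
      using ops s1 s2 s3 by blast
    then show ?thesis
    proof cases
      case s
      obtain k where k: "k < length (sleaves t)" "p = lp t ! k" using lpaths_nth s(1) by blast
      show ?thesis using s k sub_leaves[OF k(1), of u] Some by (auto simp: leaves_def)
    next
      case i
      have "\<exists>k \<le> length (sleaves t). sleaves (modify_at (\<lambda>v. if b then Jn (Leaf u) v else Jn v (Leaf u)) p t) = take k (sleaves t) @ u # drop k (sleaves t)"
        by (rule ins_leaves[OF i(1)]) (rule ins_f)
      then obtain k where "k \<le> length (sleaves t)"
        "sleaves (modify_at (\<lambda>v. if b then Jn (Leaf u) v else Jn v (Leaf u)) p t) = take k (sleaves t) @ u # drop k (sleaves t)"
        by blast
      then show ?thesis using i Some by (auto simp: leaves_def)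
    next
      case d
      obtain k where k: "k < length (sleaves t)" "p = lp t ! k" using lpaths_nth d(1) by blast
      obtain u where u: "u \<in> Tn n" using fT by blast
      show ?thesis using d k del_leaves[OF k(1)] Some u by (auto simp: leaves_def)
    qed
  qed
  then obtain u where u: "u \<in> Tn n" and
    c: "leaves Y = leaves X
     \<or> (\<exists>k<length (leaves X). leaves Y = take k (leaves X) @ u # drop (Suc k) (leaves X))
     \<or> (\<exists>k\<le>length (leaves X). leaves Y = take k (leaves X) @ u # drop k (leaves X))
     \<or> (\<exists>k<length (leaves X). leaves Y = take k (leaves X) @ drop (Suc k) (leaves X))" by blast
  have "set (leaves Y) \<subseteq> insert u (set (leaves X))"
    using c
  proof (elim disjE exE conjE)
    fix k assume "leaves Y = take k (leaves X) @ u # drop (Suc k) (leaves X)"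
    then show ?thesis using set_edit1 by metis
  next
    fix k assume "leaves Y = take k (leaves X) @ u # drop k (leaves X)"
    then show ?thesis using set_edit1 by metis
  next
    fix k assume "leaves Y = take k (leaves X) @ drop (Suc k) (leaves X)"
    then show ?thesis using set_edit2 by (metis subset_insertI2)
  qed auto
  then have "over_terms n Y" using sX u by (auto simp: over_terms_def)
  moreover have "edit (leaves X) (leaves Y)" using c unfolding edit_def by blast
  ultimately show ?thesis by blast
qed



lemma EB:
  assumes "\<And>x. x \<in> set_pmf p \<Longrightarrow> x \<in> A \<Longrightarrow> c \<le> emeasure (measure_pmf (f x)) B"
  shows "c * emeasure (measure_pmf p) A \<le> emeasure (measure_pmf (bind_pmf p f)) B"
proof -
  have "c * emeasure (measure_pmf p) A = (\<integral>\<^sup>+x. c * indicator A x \<partial>measure_pmf p)"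
    by (simp add: nn_integral_cmult_indicator)
  also have "\<dots> \<le> (\<integral>\<^sup>+x. emeasure (measure_pmf (f x)) B \<partial>measure_pmf p)"
    by (rule nn_integral_mono_AE) (auto simp: AE_measure_pmf_iff indicator_def assms)
  also have "\<dots> = emeasure (measure_pmf (bind_pmf p f)) B" by simp
  finally show ?thesis .
qed

lemma emeasure_one: "set_pmf p \<subseteq> B \<Longrightarrow> emeasure (measure_pmf p) B = 1"
  by (rule measure_pmf.emeasure_eq_1_AE) (auto simp: AE_measure_pmf_iff)

lemma EB1:
  assumes "\<And>x. x \<in> set_pmf p \<Longrightarrow> c \<le> emeasure (measure_pmf (f x)) B"
  shows "c \<le> emeasure (measure_pmf (bind_pmf p f)) B"
  using EB[of p UNIV c f B] assms by (simp add: emeasure_one)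

lemma op_bind:
  assumes "i \<in> {0, 1, 2}" "ennreal q \<le> emeasure (measure_pmf (f i)) B" "0 \<le> q"
  shows "ennreal (q / 3) \<le> emeasure (measure_pmf (bind_pmf (pmf_of_set {0, 1, 2::nat}) f)) B"
proof -
  have "emeasure (measure_pmf (pmf_of_set {0, 1, 2::nat})) {i} = ennreal (1/3)"
    using assms(1) by (auto simp: emeasure_pmf_single)
  then have "ennreal q * ennreal (1/3) \<le> emeasure (measure_pmf (bind_pmf (pmf_of_set {0, 1, 2::nat}) f)) B"
    using EB[of "pmf_of_set {0, 1, 2::nat}" "{i}" "ennreal q" f B] assms(2) by auto
  moreover have "ennreal (q / 3) = ennreal q * ennreal (1/3)" using assms(3) by (simp add: ennreal_mult'' [symmetric])
  ultimately show ?thesis by simp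
qed

lemma pmf_of_set_ge:
  assumes "finite S" "S \<noteq> {}" "A' \<subseteq> S \<inter> A"
  shows "ennreal (real (card A') / real (card S)) \<le> emeasure (measure_pmf (pmf_of_set S)) A"
proof -
  have "emeasure (measure_pmf (pmf_of_set S)) A = ennreal (measure (measure_pmf (pmf_of_set S)) A)"
    by (simp add: measure_pmf.emeasure_eq_measure)
  also have "measure (measure_pmf (pmf_of_set S)) A = real (card (S \<inter> A)) / real (card S)"
    using assms by (simp add: measure_pmf_of_set)
  finally have e: "emeasure (measure_pmf (pmf_of_set S)) A = ennreal (real (card (S \<inter> A)) / real (card S))" .
  have "card A' \<le> card (S \<inter> A)" using assms by (intro card_mono) auto
  then have "real (card A') / real (card S) \<le> real (card (S \<inter> A)) / real (card S)"
    by (intro divide_right_mono) auto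
  then show ?thesis unfolding e by (rule ennreal_leI)
qed



definition FK :: "nat \<Rightarrow> nat \<Rightarrow> real" where "FK n k = 3 * real k + 3 * real n * harm k"
definition ED :: "nat \<Rightarrow> nat \<Rightarrow> real" where "ED n d = 6 * real n * harm d"
definition Kc :: "tree \<Rightarrow> nat" where "Kc X = Lc X - Pc X"
definition Dc :: "nat \<Rightarrow> tree \<Rightarrow> nat" where "Dc n X = n - Pc X"
definition gpot :: "nat \<Rightarrow> tree \<Rightarrow> real" where "gpot n X = FK n (Kc X) + ED n (Dc n X)"

lemma FK_mono: "k \<le> k' \<Longrightarrow> FK n k \<le> FK n k'"
  unfolding FK_def using harm_mono[of k k', where 'a=real] by (intro add_mono mult_left_mono) auto

lemma ED_mono: "k \<le> k' \<Longrightarrow> ED n k \<le> ED n k'"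
  unfolding ED_def using harm_mono[of k k', where 'a=real] by (intro mult_left_mono) auto

lemma FK_nonneg: "FK n k \<ge> 0"
  unfolding FK_def using harm_nonneg[of k, where 'a=real] by auto

lemma ED_nonneg: "ED n k \<ge> 0"
  unfolding ED_def using harm_nonneg[of k, where 'a=real] by auto

lemma gpot_nonneg: "gpot n X \<ge> 0"
  unfolding gpot_def using FK_nonneg ED_nonneg by (simp add: add_nonneg_nonneg)

lemma FK_drop: "k \<ge> 1 \<Longrightarrow> FK n (k - 1) + (3 + 3 * real n / real k) = FK n k"
proof -
  assume "k \<ge> 1"
  then obtain m where k: "k = Suc m" by (cases k) auto
  show ?thesis unfolding k FK_def by (simp add: harm_Suc field_simps)
qed

lemma ED_drop: "d \<ge> 1 \<Longrightarrow> ED n (d - 1) + 6 * real n / real d = ED n d"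
proof -
  assume "d \<ge> 1"
  then obtain m where k: "d = Suc m" by (cases d) auto
  show ?thesis unfolding k ED_def by (simp add: harm_Suc field_simps)
qed

lemma gpot_le:
  assumes "Kc Y \<le> Kc X" "Pc X \<le> Pc Y"
  shows "gpot n Y \<le> gpot n X"
  unfolding gpot_def using assms by (intro add_mono FK_mono ED_mono) (auto simp: Dc_def)

lemma acc_mono:
  assumes n: "n \<ge> 1" and wpos: "\<forall>i\<in>{1..n}. w i > 0" and oX: "over_terms n X"
    and Y: "Y \<in> set_pmf (mutate n X)"
  shows "Kc (acc w X Y) \<le> Kc X \<and> Pc X \<le> Pc (acc w X Y) \<and> over_terms n (acc w X Y)"
proof -
  have s: "over_terms n Y \<and> edit (leaves X) (leaves Y)" by (rule supp_mutate[OF n oX Y])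
  show ?thesis
  proof (cases "worder w Y > worder w X \<or> (worder w Y = worder w X \<and> cplx Y \<le> cplx X)")
    case True
    then have "Pc X \<le> Pc Y \<and> Lc Y - Pc Y \<le> Lc X - Pc X"
      using mono_step[OF wpos oX] s by blast
    then show ?thesis using True s by (simp add: acc_def Kc_def)
  next
    case False
    then show ?thesis using oX by (auto simp: acc_def)
  qed
qed

lemma DRIFTGEN:
  fixes M :: "'a pmf"
  assumes "\<forall>Y \<in> set_pmf M. h Y \<le> c" "\<forall>Y \<in> set_pmf M. Y \<in> Good \<longrightarrow> h Y + \<delta> \<le> c"
    "0 \<le> \<delta>" "\<forall>Y\<in>set_pmf M. 0 \<le> h Y" "1 \<le> ennreal \<delta> * emeasure (measure_pmf M) Good"
  shows "(\<integral>\<^sup>+Y. ennreal (h Y) \<partial>measure_pmf M) + 1 \<le> ennreal c"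
proof -
  have "(\<integral>\<^sup>+Y. ennreal (h Y) \<partial>measure_pmf M) + 1 \<le>
        (\<integral>\<^sup>+Y. ennreal (h Y) \<partial>measure_pmf M) + ennreal \<delta> * emeasure (measure_pmf M) Good"
    using assms(5) by (rule add_left_mono)
  also have "\<dots> = (\<integral>\<^sup>+Y. ennreal (h Y) + ennreal \<delta> * indicator Good Y \<partial>measure_pmf M)"
    by (subst nn_integral_add) (auto simp: nn_integral_cmult_indicator)
  also have "\<dots> \<le> (\<integral>\<^sup>+Y. ennreal c \<partial>measure_pmf M)"
  proof (rule nn_integral_mono_AE)
    show "AE Y in measure_pmf M. ennreal (h Y) + ennreal \<delta> * indicator Good Y \<le> ennreal c"
      unfolding AE_measure_pmf_iff
    proof
      fix Y assume Y: "Y \<in> set_pmf M"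
      show "ennreal (h Y) + ennreal \<delta> * indicator Good Y \<le> ennreal c"
      proof (cases "Y \<in> Good")
        case True
        then have "ennreal (h Y) + ennreal \<delta> = ennreal (h Y + \<delta>)" using assms(3,4) Y by (simp add: ennreal_plus)
        then show ?thesis using True Y assms(2) by (simp add: ennreal_leI)
      next
        case False
        then show ?thesis using Y assms(1) by (simp add: ennreal_leI)
      qed
    qed
  qed
  also have "\<dots> = ennreal c" by (simp add: measure_pmf.emeasure_space_1)
  finally show ?thesis .
qed



lemma mutate_Some: "mutate n (Some t) = bind_pmf (pmf_of_set {0, 1, 2::nat})
   (\<lambda>op. if op = 0 then mut_sub n t else if op = 1 then mut_ins n t else mut_del t)"
  by (simp add: mutate_def)

lemma mutate_None: "mutate n None = bind_pmf (pmf_of_set {0, 1, 2::nat})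
   (\<lambda>op. if op = 1 then map_pmf (\<lambda>u. Some (Leaf u)) (pmf_of_set (Tn n)) else return_pmf None)"
  by (simp add: mutate_def)

lemma Pc_le_n: "over_terms n X \<Longrightarrow> Pc X \<le> n"
  unfolding Pc_def over_terms_def using posl_Tn card_mono[of "{1..n}"] by fastforce

lemma Pc_le_L: "Pc X \<le> Lc X"
  unfolding Pc_def Lc_def by (rule card_posl)

lemma worder_mono_sub:
  assumes wpos: "\<forall>i\<in>{1..n}. w i > 0" and oY: "over_terms n Y"
    and sub: "posl (leaves X) \<subseteq> posl (leaves Y)"
  shows "worder w X \<le> worder w Y"
proof -
  have "posl (leaves Y) \<subseteq> {1..n}" using oY posl_Tn by (simp add: over_terms_def)
  have nn: "\<forall>i\<in>posl (leaves Y). w i \<ge> 0"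
  proof
    fix i assume "i \<in> posl (leaves Y)"
    then have "i \<in> {1..n}" using \<open>posl (leaves Y) \<subseteq> {1..n}\<close> by blast
    then show "w i \<ge> 0" using wpos by (meson less_imp_le)
  qed
  show ?thesis unfolding worder_posl by (rule sum_mono2[OF finite_posl sub]) (use nn in blast)
qed

lemma drift_K:
  assumes n: "n \<ge> 1" and wpos: "\<forall>i\<in>{1..n}. w i > 0" and oX: "over_terms n X" and K: "Kc X \<ge> 1"
  shows "(\<integral>\<^sup>+Y. ennreal (gpot n (acc w X Y)) \<partial>measure_pmf (mutate n X)) + 1 \<le> ennreal (gpot n X)"
proof -
  have "Lc X \<ge> 1" using K by (simp add: Kc_def)
  then obtain t where X: "X = Some t" by (cases X) (auto simp: Lc_def leaves_def)
  define l where "l = sleaves t"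
  define L where "L = length l"
  have lX: "leaves X = l" by (simp add: X l_def leaves_def)
  have LX: "Lc X = L" by (simp add: Lc_def lX L_def)
  define GK where "GK = {k. k < L \<and> \<not> pfo l k}"
  define Good where "Good = (\<lambda>k. del_leaf t (lp t ! k)) ` GK"
  define \<delta> where "\<delta> = 3 + 3 * real n / real (Kc X)"
  have PXn: "Pc X \<le> n" by (rule Pc_le_n[OF oX])
  have good: "gpot n (acc w X Y) + \<delta> \<le> gpot n X" if Y: "Y \<in> Good" for Y
  proof -
    obtain k where k: "k \<in> GK" "Y = del_leaf t (lp t ! k)" using Y Good_def by blast
    have kL: "k < length (sleaves t)" using k by (simp add: GK_def L_def l_def)
    have lY: "leaves Y = take k l @ drop (Suc k) l" using del_leaves[OF kL] k by (simp add: l_def)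
    have ps: "posl l \<subseteq> posl (leaves Y)" unfolding lY by (rule good_del) (use k in \<open>auto simp: GK_def L_def\<close>)
    have oY: "over_terms n Y" using oX set_edit2[of k l "Suc k"] unfolding over_terms_def lY lX by blast
    have wle: "worder w X \<le> worder w Y" by (rule worder_mono_sub[OF wpos oY]) (use ps lX in simp)
    have LY: "Lc Y = L - 1" using kL by (simp add: Lc_def lY L_def l_def)
    have "cplx Y \<le> cplx X" unfolding cplx_eq LY LX by simp
    then have acc: "acc w X Y = Y" using wle by (auto simp: acc_def)
    have PP: "Pc X \<le> Pc Y" unfolding Pc_def lX using card_mono[OF finite_posl ps] .
    have KY: "Kc Y \<le> Kc X - 1" using PP LY LX K by (simp add: Kc_def)
    have "gpot n Y \<le> FK n (Kc X - 1) + ED n (Dc n X)"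
      unfolding gpot_def using PP by (intro add_mono FK_mono ED_mono KY) (simp add: Dc_def)
    then show ?thesis using FK_drop[OF K, of n] acc by (simp add: gpot_def \<delta>_def)
  qed
  have cGK: "card GK \<ge> Kc X"
    using card_good_del[of l] by (simp add: GK_def L_def Kc_def Pc_def lX LX flip: L_def)
  have L1: "L \<ge> 1" using \<open>Lc X \<ge> 1\<close> LX by simp
  have prob: "ennreal (real (card GK) / real L / 3) \<le> emeasure (measure_pmf (mutate n X)) Good"
  proof -
    have md: "mut_del t = map_pmf (del_leaf t) (pmf_of_set (lpaths t))" by (simp add: mut_del_def map_pmf_def)
    have inj: "inj_on ((!) (lp t)) GK" by (rule inj_on_nth[OF distinct_lp]) (auto simp: GK_def L_def l_def length_lp)
    have cl: "card (lpaths t) = L" using distinct_card[OF distinct_lp[of t]] by (simp add: set_lp length_lp L_def l_def)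
    have sub: "(!) (lp t) ` GK \<subseteq> lpaths t \<inter> (del_leaf t -` Good)"
      by (auto simp: GK_def L_def l_def length_lp Good_def simp flip: set_lp)
    have "ennreal (real (card ((!) (lp t) ` GK)) / real (card (lpaths t))) \<le> emeasure (measure_pmf (pmf_of_set (lpaths t))) (del_leaf t -` Good)"
      by (rule pmf_of_set_ge[OF lpaths_fin lpaths_ne sub])
    then have "ennreal (real (card GK) / real L) \<le> emeasure (measure_pmf (mut_del t)) Good"
      unfolding md using card_image[OF inj] cl by simp
    then show ?thesis unfolding X mutate_Some by (intro op_bind[where i = 2]) auto
  qed
  have qd: "1 \<le> \<delta> * (real (card GK) / real L / 3)"
  proof -
    have Kpos: "real (Kc X) > 0" using K by simp
    have "\<delta> * (real (card GK) / real L / 3) = (1 + real n / real (Kc X)) * real (card GK) / real L"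
      using L1 Kpos by (simp add: \<delta>_def field_simps)
    also have "\<dots> \<ge> (1 + real n / real (Kc X)) * real (Kc X) / real L"
      using cGK by (intro divide_right_mono mult_left_mono) auto
    also have "(1 + real n / real (Kc X)) * real (Kc X) = real (Kc X) + real n"
      using Kpos by (simp add: field_simps)
    finally have "\<delta> * (real (card GK) / real L / 3) \<ge> (real (Kc X) + real n) / real L" .
    moreover have "real L \<le> real (Kc X) + real n" using PXn LX Pc_le_L[of X] by (simp add: Kc_def)
    ultimately show ?thesis using L1 by (simp add: le_divide_eq)
  qed
  have dpos: "0 \<le> \<delta>" by (simp add: \<delta>_def)
  have "1 \<le> ennreal \<delta> * ennreal (real (card GK) / real L / 3)"
    using qd dpos by (simp add: ennreal_mult[symmetric] ennreal_leI del: ennreal_mult)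
  also have "\<dots> \<le> ennreal \<delta> * emeasure (measure_pmf (mutate n X)) Good"
    by (rule mult_left_mono[OF prob]) simp
  finally have pr: "1 \<le> ennreal \<delta> * emeasure (measure_pmf (mutate n X)) Good" .
  show ?thesis
  proof (rule DRIFTGEN[where Good = Good and \<delta> = \<delta>])
    show "\<forall>Y\<in>set_pmf (mutate n X). gpot n (acc w X Y) \<le> gpot n X"
      using acc_mono[OF n wpos oX] gpot_le by blast
    show "\<forall>Y\<in>set_pmf (mutate n X). Y \<in> Good \<longrightarrow> gpot n (acc w X Y) + \<delta> \<le> gpot n X"
      using good by blast
  qed (use dpos gpot_nonneg pr in auto)
qed



lemma drift_D:
  assumes n: "n \<ge> 1" and wpos: "\<forall>i\<in>{1..n}. w i > 0" and oX: "over_terms n X"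
    and K: "Kc X = 0" and D: "Dc n X \<ge> 1"
  shows "(\<integral>\<^sup>+Y. ennreal (gpot n (acc w X Y)) \<partial>measure_pmf (mutate n X)) + 1 \<le> ennreal (gpot n X)"
proof -
  define l where "l = leaves X"
  define L where "L = length l"
  define M where "M = {1..n} - fst ` set l"
  define GU where "GU = (\<lambda>j. (j, True)) ` M"
  define Good where "Good = {Y. \<exists>k\<le>L. \<exists>u\<in>GU. leaves Y = take k l @ u # drop k l}"
  define \<delta> where "\<delta> = 6 * real n / real (Dc n X)"
  have LP: "L = Pc X" using K Pc_le_L[of X] by (simp add: Kc_def Lc_def L_def l_def)
  have PXn: "Pc X \<le> n" by (rule Pc_le_n[OF oX])
  have good: "gpot n (acc w X Y) + \<delta> \<le> gpot n X" if Y: "Y \<in> Good" and oY: "over_terms n Y" for Y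
  proof -
    obtain k u where k: "k \<le> L" "u \<in> GU" "leaves Y = take k l @ u # drop k l" using Y Good_def by blast
    obtain j where j: "j \<in> M" "u = (j, True)" using k(2) GU_def by blast
    have jn: "j \<notin> fst ` set l" "j \<in> {1..n}" using j M_def by auto
    have pY: "posl (leaves Y) = insert j (posl l)" "j \<notin> posl l" using good_ins(1)[OF jn(1), of k] good_ins(2)[OF jn(1)] k j by auto
    have wY: "worder w Y = worder w X + w j"
      unfolding worder_posl pY(1) using pY(2) finite_posl by (simp add: l_def)
    have "w j > 0" using wpos jn by blast
    then have acc: "acc w X Y = Y" using wY by (simp add: acc_def)
    have PY: "Pc Y = Pc X + 1" using pY finite_posl by (simp add: Pc_def l_def)
    have LY: "Lc Y = L + 1" using k by (simp add: Lc_def L_def)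
    have KY: "Kc Y = 0" using LY PY LP by (simp add: Kc_def)
    have DY: "Dc n Y = Dc n X - 1" using PY by (simp add: Dc_def)
    have "gpot n Y + \<delta> = gpot n X" using ED_drop[OF D, of n] KY K DY by (simp add: gpot_def \<delta>_def)
    then show ?thesis using acc by simp
  qed
  have injU: "inj_on (\<lambda>j. (j, True)) M" by (auto intro: inj_onI)
  have cM: "card M \<ge> Dc n X"
  proof -
    have "card (fst ` set l) \<le> L" unfolding L_def using card_image_le[of "set l" fst] card_length[of l] by simp
    moreover have "n - card (fst ` set l) \<le> card M"
      unfolding M_def using diff_card_le_card_Diff[of "fst ` set l" "{1..n}"] by simp
    ultimately show ?thesis using LP by (simp add: Dc_def)
  qed
  have cGU: "card GU = card M" unfolding GU_def by (rule card_image[OF injU])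
  have GUT: "GU \<subseteq> Tn n" by (auto simp: GU_def M_def Tn_def)
  have fT: "finite (Tn n)" "Tn n \<noteq> {}" using finite_Tn Tn_ne n by auto
  have cT: "card (Tn n) = 2 * n" by (rule card_Tn)
  have prob: "ennreal (real (card GU) / real (card (Tn n)) / 3) \<le> emeasure (measure_pmf (mutate n X)) Good"
  proof (cases X)
    case None
    have l0: "l = []" using None by (simp add: l_def leaves_def)
    have sub: "GU \<subseteq> Tn n \<inter> ((\<lambda>u. Some (Leaf u)) -` Good)"
      using GUT by (auto simp: Good_def l0 L_def leaves_def)
    have "ennreal (real (card GU) / real (card (Tn n))) \<le> emeasure (measure_pmf (pmf_of_set (Tn n))) ((\<lambda>u. Some (Leaf u)) -` Good)"
      by (rule pmf_of_set_ge[OF fT sub])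
    then have "ennreal (real (card GU) / real (card (Tn n))) \<le> emeasure (measure_pmf (map_pmf (\<lambda>u. Some (Leaf u)) (pmf_of_set (Tn n)))) Good"
      by simp
    then show ?thesis unfolding None mutate_None by (intro op_bind[where i = 1]) auto
  next
    case (Some t)
    have lt: "l = sleaves t" using Some by (simp add: l_def leaves_def)
    have fp: "finite (paths t)" "paths t \<noteq> {}" by (rule finite_paths, rule paths_ne)
    have inner: "ennreal (real (card GU) / real (card (Tn n))) \<le>
       emeasure (measure_pmf (pmf_of_set (Tn n) \<bind> (\<lambda>u. bernoulli_pmf (1/2) \<bind>
          (\<lambda>b. return_pmf (Some (modify_at (\<lambda>v. if b then Jn (Leaf u) v else Jn v (Leaf u)) p t)))))) Good"
      if p: "p \<in> paths t" for p
    proof -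
      have "ennreal (real (card GU) / real (card (Tn n))) \<le> emeasure (measure_pmf (pmf_of_set (Tn n))) GU"
        by (rule pmf_of_set_ge[OF fT]) (use GUT in auto)
      also have "\<dots> = 1 * emeasure (measure_pmf (pmf_of_set (Tn n))) GU" by simp
      also have "\<dots> \<le> emeasure (measure_pmf (pmf_of_set (Tn n) \<bind> (\<lambda>u. bernoulli_pmf (1/2) \<bind>
          (\<lambda>b. return_pmf (Some (modify_at (\<lambda>v. if b then Jn (Leaf u) v else Jn v (Leaf u)) p t)))))) Good"
      proof (rule EB)
        fix u assume u: "u \<in> GU"
        have ss: "set_pmf (bernoulli_pmf (1/2) \<bind>
          (\<lambda>b. return_pmf (Some (modify_at (\<lambda>v. if b then Jn (Leaf u) v else Jn v (Leaf u)) p t)))) \<subseteq> Good"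
        proof
          fix Y assume "Y \<in> set_pmf (bernoulli_pmf (1/2) \<bind>
            (\<lambda>b. return_pmf (Some (modify_at (\<lambda>v. if b then Jn (Leaf u) v else Jn v (Leaf u)) p t))))"
          then obtain b where Yb: "Y = Some (modify_at (\<lambda>v. if b then Jn (Leaf u) v else Jn v (Leaf u)) p t)"
            by auto
          have "\<exists>k \<le> length (sleaves t). sleaves (modify_at (\<lambda>v. if b then Jn (Leaf u) v else Jn v (Leaf u)) p t) = take k (sleaves t) @ u # drop k (sleaves t)"
            by (rule ins_leaves[OF p]) (rule ins_f)
          then show "Y \<in> Good" using u Yb by (auto simp: Good_def lt L_def leaves_def)
        qed
        then show "1 \<le> emeasure (measure_pmf (bernoulli_pmf (1/2) \<bind>
          (\<lambda>b. return_pmf (Some (modify_at (\<lambda>v. if b then Jn (Leaf u) v else Jn v (Leaf u)) p t))))) Good"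
          by (subst emeasure_one[OF ss]) simp
      qed
      finally show ?thesis .
    qed
    have "ennreal (real (card GU) / real (card (Tn n))) \<le> emeasure (measure_pmf (mut_ins n t)) Good"
      unfolding mut_ins_def by (rule EB1) (use inner fp in simp)
    then show ?thesis unfolding Some mutate_Some by (intro op_bind[where i = 1]) auto
  qed
  have Dpos: "real (Dc n X) > 0" using D by simp
  have qd: "1 \<le> \<delta> * (real (card GU) / real (card (Tn n)) / 3)"
  proof -
    have "\<delta> * (real (card GU) / real (card (Tn n)) / 3) = real (card GU) / real (Dc n X)"
      using n Dpos by (simp add: \<delta>_def cT field_simps)
    moreover have "real (card GU) \<ge> real (Dc n X)" using cM cGU by simp
    ultimately show ?thesis using Dpos by (simp add: le_divide_eq)
  qed
  have dpos: "0 \<le> \<delta>" by (simp add: \<delta>_def)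
  have "1 \<le> ennreal \<delta> * ennreal (real (card GU) / real (card (Tn n)) / 3)"
    using qd dpos by (simp add: ennreal_mult[symmetric] ennreal_leI del: ennreal_mult)
  also have "\<dots> \<le> ennreal \<delta> * emeasure (measure_pmf (mutate n X)) Good"
    by (rule mult_left_mono[OF prob]) simp
  finally have pr: "1 \<le> ennreal \<delta> * emeasure (measure_pmf (mutate n X)) Good" .
  show ?thesis
  proof (rule DRIFTGEN[where Good = Good and \<delta> = \<delta>])
    show "\<forall>Y\<in>set_pmf (mutate n X). gpot n (acc w X Y) \<le> gpot n X"
      using acc_mono[OF n wpos oX] gpot_le by blast
    show "\<forall>Y\<in>set_pmf (mutate n X). Y \<in> Good \<longrightarrow> gpot n (acc w X Y) + \<delta> \<le> gpot n X"
      using good supp_mutate[OF n oX] by blast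
  qed (use dpos gpot_nonneg pr in auto)
qed



lemma opt_cond:
  assumes n: "n \<ge> 1" and wpos: "\<forall>i\<in>{1..n}. w i > 0" and oX: "over_terms n X"
    and K: "Kc X = 0" and D: "Dc n X = 0"
  shows "optimal n w X"
proof -
  have PXn: "Pc X \<le> n" by (rule Pc_le_n[OF oX])
  have P: "Pc X = n" using PXn D by (simp add: Dc_def)
  have L: "Lc X = n" using K P Pc_le_L[of X] by (simp add: Kc_def)
  have sX: "posl (leaves X) \<subseteq> {1..n}" using oX posl_Tn by (simp add: over_terms_def)
  have eqX: "posl (leaves X) = {1..n}"
    using card_subset_eq[OF _ sX] P by (simp add: Pc_def)
  have wX: "worder w X = sum w {1..n}" by (simp add: worder_posl eqX)
  show ?thesis unfolding optimal_def
  proof (intro conjI allI impI)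
    show "over_terms n X" by (rule oX)
    fix Y assume oY: "over_terms n Y"
    have sY: "posl (leaves Y) \<subseteq> {1..n}" using oY posl_Tn by (simp add: over_terms_def)
    have nn: "\<forall>i\<in>{1..n}. w i \<ge> 0" using wpos by (meson less_imp_le)
    have wY: "worder w Y = sum w (posl (leaves Y))" by (simp add: worder_posl)
    show "worder w Y \<le> worder w X" unfolding wY wX
      by (rule sum_mono2[OF _ sY]) (use nn in auto)
    assume eq: "worder w Y = worder w X"
    have "posl (leaves Y) = {1..n}"
    proof (rule ccontr)
      assume "posl (leaves Y) \<noteq> {1..n}"
      then have ne: "{1..n} - posl (leaves Y) \<noteq> {}" using sY by blast
      have "sum w {1..n} = sum w ({1..n} - posl (leaves Y)) + sum w (posl (leaves Y))"
        using sum.subset_diff[OF sY] by simp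
      moreover have "sum w ({1..n} - posl (leaves Y)) > 0" using ne wpos by (intro sum_pos) auto
      ultimately show False using eq wX wY by simp
    qed
    then have "Pc Y = n" by (simp add: Pc_def)
    then have "Lc Y \<ge> n" using Pc_le_L[of Y] by simp
    then show "cplx X \<le> cplx Y" unfolding cplx_eq L by simp
  qed
qed

lemma nonopt_cases:
  assumes n: "n \<ge> 1" and wpos: "\<forall>i\<in>{1..n}. w i > 0" and oX: "over_terms n X"
    and no: "\<not> optimal n w X"
  shows "Kc X \<ge> 1 \<or> (Kc X = 0 \<and> Dc n X \<ge> 1)"
  using opt_cond[OF n wpos oX] no by fastforce

lemma step_ineq:
  assumes n: "n \<ge> 1" and wpos: "\<forall>i\<in>{1..n}. w i > 0" and oX: "over_terms n X"
  shows "(\<integral>\<^sup>+Y. ennreal (gpot n Y) \<partial>measure_pmf (gp_stopped_step n w X))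
          + indicator {X. \<not> optimal n w X} X \<le> ennreal (gpot n X)"
proof (cases "optimal n w X")
  case True
  then show ?thesis by (simp add: gp_stopped_step_def)
next
  case False
  have "(\<integral>\<^sup>+Y. ennreal (gpot n (acc w X Y)) \<partial>measure_pmf (mutate n X)) + 1 \<le> ennreal (gpot n X)"
    using nonopt_cases[OF n wpos oX False] drift_K[OF n wpos oX] drift_D[OF n wpos oX] by blast
  then show ?thesis using False by (simp add: gp_stopped_step_def gp_step_map)
qed

lemma supp_stopped:
  assumes n: "n \<ge> 1" and wpos: "\<forall>i\<in>{1..n}. w i > 0" and oX: "over_terms n X"
    and Y: "Y \<in> set_pmf (gp_stopped_step n w X)"
  shows "over_terms n Y"
proof (cases "optimal n w X")
  case True
  then show ?thesis using Y oX by (simp add: gp_stopped_step_def)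
next
  case False
  then obtain Z where "Z \<in> set_pmf (mutate n X)" "Y = acc w X Z"
    using Y by (auto simp: gp_stopped_step_def gp_step_map)
  then show ?thesis using acc_mono[OF n wpos oX] by blast
qed

lemma supp_state:
  assumes n: "n \<ge> 1" and wpos: "\<forall>i\<in>{1..n}. w i > 0" and oX: "over_terms n X0"
  shows "\<forall>X \<in> set_pmf (state_dist n w X0 t). over_terms n X"
proof (induction t)
  case 0
  then show ?case using oX by simp
next
  case (Suc t)
  then show ?case using supp_stopped[OF n wpos] by auto
qed

lemma chain_step:
  assumes n: "n \<ge> 1" and wpos: "\<forall>i\<in>{1..n}. w i > 0" and oX: "over_terms n X0"
  shows "(\<integral>\<^sup>+X. ennreal (gpot n X) \<partial>measure_pmf (state_dist n w X0 (Suc t)))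
     + emeasure (measure_pmf (state_dist n w X0 t)) {X. \<not> optimal n w X}
     \<le> (\<integral>\<^sup>+X. ennreal (gpot n X) \<partial>measure_pmf (state_dist n w X0 t))"
proof -
  let ?M = "measure_pmf (state_dist n w X0 t)"
  have "(\<integral>\<^sup>+X. ennreal (gpot n X) \<partial>measure_pmf (state_dist n w X0 (Suc t)))
     + emeasure ?M {X. \<not> optimal n w X}
     = (\<integral>\<^sup>+X. (\<integral>\<^sup>+Y. ennreal (gpot n Y) \<partial>measure_pmf (gp_stopped_step n w X)) \<partial>?M)
       + (\<integral>\<^sup>+X. indicator {X. \<not> optimal n w X} X \<partial>?M)"
    by simp
  also have "\<dots> = (\<integral>\<^sup>+X. (\<integral>\<^sup>+Y. ennreal (gpot n Y) \<partial>measure_pmf (gp_stopped_step n w X))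
       + indicator {X. \<not> optimal n w X} X \<partial>?M)"
    by (rule nn_integral_add[symmetric]) auto
  also have "\<dots> \<le> (\<integral>\<^sup>+X. ennreal (gpot n X) \<partial>?M)"
    by (rule nn_integral_mono_AE)
       (use supp_state[OF n wpos oX, of t] step_ineq[OF n wpos] in \<open>auto simp: AE_measure_pmf_iff\<close>)
  finally show ?thesis .
qed

lemma chain_sum:
  assumes n: "n \<ge> 1" and wpos: "\<forall>i\<in>{1..n}. w i > 0" and oX: "over_terms n X0"
  shows "(\<integral>\<^sup>+X. ennreal (gpot n X) \<partial>measure_pmf (state_dist n w X0 T))
     + (\<Sum>t<T. emeasure (measure_pmf (state_dist n w X0 t)) {X. \<not> optimal n w X})
     \<le> ennreal (gpot n X0)"
proof (induction T)
  case 0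
  then show ?case by simp
next
  case (Suc T)
  have "(\<integral>\<^sup>+X. ennreal (gpot n X) \<partial>measure_pmf (state_dist n w X0 (Suc T)))
     + (\<Sum>t<Suc T. emeasure (measure_pmf (state_dist n w X0 t)) {X. \<not> optimal n w X})
     = ((\<integral>\<^sup>+X. ennreal (gpot n X) \<partial>measure_pmf (state_dist n w X0 (Suc T)))
       + emeasure (measure_pmf (state_dist n w X0 T)) {X. \<not> optimal n w X})
     + (\<Sum>t<T. emeasure (measure_pmf (state_dist n w X0 t)) {X. \<not> optimal n w X})"
    by (simp add: add.commute add.left_commute)
  also have "\<dots> \<le> (\<integral>\<^sup>+X. ennreal (gpot n X) \<partial>measure_pmf (state_dist n w X0 T))
     + (\<Sum>t<T. emeasure (measure_pmf (state_dist n w X0 t)) {X. \<not> optimal n w X})"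
    by (rule add_right_mono[OF chain_step[OF n wpos oX]])
  also have "\<dots> \<le> ennreal (gpot n X0)" by (rule Suc.IH)
  finally show ?case .
qed

lemma exp_bound:
  assumes n: "n \<ge> 1" and wpos: "\<forall>i\<in>{1..n}. w i > 0" and oX: "over_terms n X0"
  shows "exp_opt_time n w X0 \<le> ennreal (gpot n X0)"
proof -
  have "(\<Sum>t<T. ennreal (measure_pmf.prob (state_dist n w X0 t) {X. \<not> optimal n w X})) \<le> ennreal (gpot n X0)" for T
  proof -
    have "(\<Sum>t<T. ennreal (measure_pmf.prob (state_dist n w X0 t) {X. \<not> optimal n w X}))
       = (\<Sum>t<T. emeasure (measure_pmf (state_dist n w X0 t)) {X. \<not> optimal n w X})"
      by (simp add: measure_pmf.emeasure_eq_measure)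
    also have "\<dots> \<le> (\<integral>\<^sup>+X. ennreal (gpot n X) \<partial>measure_pmf (state_dist n w X0 T))
     + (\<Sum>t<T. emeasure (measure_pmf (state_dist n w X0 t)) {X. \<not> optimal n w X})" by simp
    also have "\<dots> \<le> ennreal (gpot n X0)" by (rule chain_sum[OF n wpos oX])
    finally show ?thesis .
  qed
  then show ?thesis unfolding exp_opt_time_def by (intro suminf_le_const) auto
qed



lemma harm_le_ln: "m \<ge> 1 \<Longrightarrow> (harm m :: real) \<le> ln (real m) + 1"
  using euler_mascheroni_sequence_decreasing[of 1 m] by (simp add: harm_def)

lemma nlnK:
  assumes "n \<ge> 1" "K \<ge> 1"
  shows "real n * ln (real K) \<le> 2 * real n * ln (real n) + 2 * real K"
proof (cases "real K \<le> (real n)^2")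
  case True
  have "ln (real K) \<le> ln ((real n)^2)" using True assms by (subst ln_le_cancel_iff) auto
  also have "\<dots> = 2 * ln (real n)" by (simp add: ln_realpow)
  finally have "real n * ln (real K) \<le> real n * (2 * ln (real n))" by (intro mult_left_mono) auto
  moreover have "real K \<ge> 0" by simp
  ultimately show ?thesis by simp
next
  case False
  then have ns: "real n < sqrt (real K)" by (intro real_less_rsqrt) simp
  have sK: "sqrt (real K) > 0" using assms by simp
  have "ln (sqrt (real K)) \<le> sqrt (real K) - 1" by (rule ln_le_minus_one[OF sK])
  then have lK: "ln (real K) \<le> 2 * sqrt (real K)" by (simp add: ln_sqrt)
  have l0: "ln (real K) \<ge> 0" using assms by simp
  have "real n * ln (real K) \<le> sqrt (real K) * ln (real K)" using ns l0 by (intro mult_right_mono) auto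
  also have "\<dots> \<le> sqrt (real K) * (2 * sqrt (real K))" using lK sK by (intro mult_left_mono) auto
  also have "\<dots> = 2 * real K" by simp
  finally have "real n * ln (real K) \<le> 2 * real K" .
  moreover have "2 * real n * ln (real n) \<ge> 0" using assms by simp
  ultimately show ?thesis by linarith
qed

lemma gpot_bound:
  assumes n: "n \<ge> 2" and oX: "over_terms n X"
  shows "gpot n X \<le> 30 * (real (cplx X) + real n * ln (real n))"
proof -
  define K where "K = Kc X"
  define D where "D = Dc n X"
  have Kc: "K \<le> cplx X" unfolding K_def Kc_def cplx_eq by simp
  have Dn: "D \<le> n" by (simp add: D_def Dc_def)
  have ln2: "ln (real n) \<ge> 1/2"
  proof -
    have "ln (2::real) \<le> ln (real n)" using n by (subst ln_le_cancel_iff) auto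
    then show ?thesis using ln2_ge_two_thirds by linarith
  qed
  have lnn0: "ln (real n) \<ge> 0" using ln2 by linarith
  have ED: "ED n D \<le> 6 * real n * (ln (real n) + 1)"
  proof -
    have "harm D \<le> (harm n :: real)" by (rule harm_mono[OF Dn])
    also have "\<dots> \<le> ln (real n) + 1" by (rule harm_le_ln) (use n in simp)
    finally show ?thesis unfolding ED_def by (intro mult_left_mono) auto
  qed
  have FK: "FK n K \<le> 9 * real K + 3 * real n + 6 * real n * ln (real n)"
  proof (cases "K = 0")
    case True
    then show ?thesis using lnn0 by (simp add: FK_def harm_def)
  next
    case False
    then have K1: "K \<ge> 1" by simp
    have "harm K \<le> ln (real K) + (1::real)" by (rule harm_le_ln[OF K1])
    then have "3 * real n * harm K \<le> 3 * real n * (ln (real K) + 1)" by (intro mult_left_mono) auto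
    moreover have "real n * ln (real K) \<le> 2 * real n * ln (real n) + 2 * real K"
      by (rule nlnK) (use n K1 in auto)
    ultimately show ?thesis unfolding FK_def by (simp add: algebra_simps)
  qed
  have "gpot n X = FK n K + ED n D" by (simp add: gpot_def K_def D_def)
  also have "\<dots> \<le> 9 * real K + 9 * real n + 12 * (real n * ln (real n))" using FK ED by (simp add: algebra_simps)
  also have "real n * (1/2) \<le> real n * ln (real n)" by (rule mult_left_mono[OF ln2]) simp
  then have "9 * real n \<le> 18 * (real n * ln (real n))" by linarith
  then have "9 * real K + 9 * real n + 12 * (real n * ln (real n)) \<le> 9 * real K + 30 * (real n * ln (real n))" by simp
  also have "\<dots> \<le> 30 * (real (cplx X) + real n * ln (real n))" using Kc by simp
  finally show ?thesis .
qed

lemma main_bound: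
  assumes n: "n \<ge> 2" and wpos: "\<forall>i \<in> {1..n}. w i > 0" and oX: "over_terms n X0"
  shows "exp_opt_time n w X0 \<le> ennreal (30 * (real (cplx X0) + real n * ln (real n)))"
proof -
  have n1: "n \<ge> 1" using n by simp
  have "exp_opt_time n w X0 \<le> ennreal (gpot n X0)" by (rule exp_bound[OF n1 wpos oX])
  also have "\<dots> \<le> ennreal (30 * (real (cplx X0) + real n * ln (real n)))"
    by (rule ennreal_leI[OF gpot_bound[OF n oX]])
  finally show ?thesis .
qed

theorem theorem2:
  shows "\<exists>c::real. c > 0 \<and> (\<exists>N::nat. \<forall>n \<ge> N. \<forall>(w::nat \<Rightarrow> real) (X0::tree).
           n \<ge> 1 \<longrightarrow>
           (\<forall>i j. 1 \<le> i \<longrightarrow> i \<le> j \<longrightarrow> j \<le> n \<longrightarrow> w j \<le> w i) \<longrightarrow>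
           (\<forall>i \<in> {1..n}. w i > 0) \<longrightarrow>
           over_terms n X0 \<longrightarrow>
           exp_opt_time n w X0 \<le> ennreal (c * (real (cplx X0) + real n * ln (real n))))"
  using main_bound by (intro exI[of _ 30] conjI exI[of _ 2]) auto


end
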